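(* Let $R$ be a commutative ring, $\mathrm{S}_{11}(R)$ as below, $\mathrm{B}_3(R)$ the upper triangular $3\times3$ matrices, and $M'=\mathrm{B}_3(R)/\mathrm{S}_{11}(R)$, a free $R$-module of rank $1$ generated by the class $\overline{E}_{11}$ of $E_{11}$. Then $H^0(\mathrm{S}_{11}(R),M')\cong R$ and $H^n(\mathrm{S}_{11}(R),M')=0$ for all $n>0$.
   Context: $\mathrm{S}_{11}(R)=\left\{\begin{pmatrix}a&b&c\\0&e&d\\0&0&a\end{pmatrix}\mid a,b,c,d,e\in R\right\}\subseteq\mathrm{M}_3(R)$. $M'$ is an $\mathrm{S}_{11}(R)$-bimodule via matrix multiplication (a matrix acts on $\overline{E}_{11}$ on either side by its $(1,1)$-entry). $H^n$ is Hochschild cohomology. *)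

theory Defs
  imports Main
begin

text \<open>3x3 matrices over R are represented as functions on indices, with indices 0,1,2
 (entries outside the 3x3 range are zero for all matrices considered).\<close>
type_synonym 'a m3 = "nat \<Rightarrow> nat \<Rightarrow> 'a"

definition mmul :: "'a::comm_ring_1 m3 \<Rightarrow> 'a m3 \<Rightarrow> 'a m3" where
  "mmul A B = (\<lambda>i j. \<Sum>k<3. A i k * B k j)"

definition madd :: "'a::comm_ring_1 m3 \<Rightarrow> 'a m3 \<Rightarrow> 'a m3" where
  "madd A B = (\<lambda>i j. A i j + B i j)"

definition msmul :: "'a::comm_ring_1 \<Rightarrow> 'a m3 \<Rightarrow> 'a m3" where
  "msmul r A = (\<lambda>i j. r * A i j)"

definition mk11 :: "'a::comm_ring_1 \<Rightarrow> 'a \<Rightarrow> 'a \<Rightarrow> 'a \<Rightarrow> 'a \<Rightarrow> 'a m3" where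
  "mk11 a b c d e = (\<lambda>i j.
     if i = 0 \<and> j = 0 then a else
     if i = 0 \<and> j = 1 then b else
     if i = 0 \<and> j = 2 then c else
     if i = 1 \<and> j = 1 then e else
     if i = 1 \<and> j = 2 then d else
     if i = 2 \<and> j = 2 then a else 0)"

definition S11 :: "'a::comm_ring_1 m3 set" where
  "S11 = {mk11 a b c d e | a b c d e. True}"

text \<open>The bimodule M' = B_3(R)/S_11(R), free of rank 1 on the class of E_11, identified
 with R via r \<mapsto> r * class(E_11); a matrix acts on either side by its (1,1)-entry.\<close>
definition lact :: "'a::comm_ring_1 m3 \<Rightarrow> 'a \<Rightarrow> 'a" where
  "lact A m = A 0 0 * m"

definition ract :: "'a::comm_ring_1 \<Rightarrow> 'a m3 \<Rightarrow> 'a" where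
  "ract m A = m * A 0 0"

text \<open>Hochschild cochains C^n(A,M) = Hom_R(A^{\<otimes> n}, M), represented as R-multilinear
 maps on n-tuples (lists of length n) of elements of A, extended by 0 elsewhere.\<close>
definition cochains :: "'a::comm_ring_1 m3 set \<Rightarrow> nat \<Rightarrow> ('a m3 list \<Rightarrow> 'a) set" where
  "cochains A n = {f.
     (\<forall>xs. \<not> (length xs = n \<and> set xs \<subseteq> A) \<longrightarrow> f xs = 0) \<and>
     (\<forall>i<n. \<forall>xs y z r. length xs = n \<and> set xs \<subseteq> A \<and> y \<in> A \<and> z \<in> A \<longrightarrow>
         f (xs[i := madd y z]) = f (xs[i := y]) + f (xs[i := z]) \<and>
         f (xs[i := msmul r y]) = r * f (xs[i := y]))}"

definition hdiff :: "'a::comm_ring_1 m3 set \<Rightarrow> ('a m3 \<Rightarrow> 'a \<Rightarrow> 'a) \<Rightarrow> ('a \<Rightarrow> 'a m3 \<Rightarrow> 'a)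
    \<Rightarrow> nat \<Rightarrow> ('a m3 list \<Rightarrow> 'a) \<Rightarrow> 'a m3 list \<Rightarrow> 'a" where
  "hdiff A L Rt n f xs =
     (if length xs = Suc n \<and> set xs \<subseteq> A then
        L (xs ! 0) (f (tl xs))
        + (\<Sum>i<n. (-1) ^ (i + 1) * f (take i xs @ [mmul (xs ! i) (xs ! (i + 1))] @ drop (i + 2) xs))
        + (-1) ^ (n + 1) * Rt (f (take n xs)) (xs ! n)
      else 0)"

definition cocycles :: "'a::comm_ring_1 m3 set \<Rightarrow> ('a m3 \<Rightarrow> 'a \<Rightarrow> 'a) \<Rightarrow> ('a \<Rightarrow> 'a m3 \<Rightarrow> 'a)
    \<Rightarrow> nat \<Rightarrow> ('a m3 list \<Rightarrow> 'a) set" where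
  "cocycles A L Rt n = {f \<in> cochains A n. hdiff A L Rt n f = (\<lambda>_. 0)}"

definition coboundaries :: "'a::comm_ring_1 m3 set \<Rightarrow> ('a m3 \<Rightarrow> 'a \<Rightarrow> 'a) \<Rightarrow> ('a \<Rightarrow> 'a m3 \<Rightarrow> 'a)
    \<Rightarrow> nat \<Rightarrow> ('a m3 list \<Rightarrow> 'a) set" where
  "coboundaries A L Rt n = (case n of 0 \<Rightarrow> {\<lambda>_. 0} | Suc k \<Rightarrow> hdiff A L Rt k ` cochains A k)"

text \<open>H^n = cocycles / coboundaries; H^n = 0 iff every cocycle is a coboundary.\<close>
definition hochschild_vanishes where
  "hochschild_vanishes A L Rt n \<longleftrightarrow> cocycles A L Rt n \<subseteq> coboundaries A L Rt n"

end

theory Submission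
  imports Defs
begin

lemma mmul_mk11: "mmul (mk11 a b c d e) (mk11 a' b' c' d' e') =
  mk11 (a*a') (a*b'+b*e') (a*c'+b*d'+c*a') (e*d'+d*a') (e*e')"
  by (auto simp: mmul_def mk11_def fun_eq_iff eval_nat_numeral algebra_simps)

lemma madd_mk11: "madd (mk11 a b c d e) (mk11 a' b' c' d' e') =
  mk11 (a+a') (b+b') (c+c') (d+d') (e+e')"
  by (auto simp: madd_def mk11_def fun_eq_iff)

lemma msmul_mk11: "msmul r (mk11 a b c d e) = mk11 (r*a) (r*b) (r*c) (r*d) (r*e)"
  by (auto simp: msmul_def mk11_def fun_eq_iff)

lemma mk11_ent[simp]: "mk11 a b c d e 0 0 = a" "mk11 a b c d e 0 1 = b" "mk11 a b c d e 0 2 = c" "mk11 a b c d e 0 (Suc 0) = b"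
  by (auto simp: mk11_def)

lemma mk11_S11[simp]: "mk11 a b c d e \<in> S11" unfolding S11_def by blast

lemma S11E: "x \<in> S11 \<Longrightarrow> (\<And>a b c d e. x = mk11 a b c d e \<Longrightarrow> P) \<Longrightarrow> P"
  by (auto simp: S11_def)

lemma S11_closed: "x \<in> S11 \<Longrightarrow> y \<in> S11 \<Longrightarrow> mmul x y \<in> S11"
  "x \<in> S11 \<Longrightarrow> y \<in> S11 \<Longrightarrow> madd x y \<in> S11" "x \<in> S11 \<Longrightarrow> msmul r x \<in> S11"
  by (auto elim!: S11E simp: mmul_mk11 madd_mk11 msmul_mk11)

lemma mk11_decomp: "mk11 a b c d e = madd (msmul a (mk11 1 0 0 0 0)) (madd (msmul b (mk11 0 1 0 0 0))
   (madd (msmul c (mk11 0 0 1 0 0)) (madd (msmul d (mk11 0 0 0 1 0)) (msmul e (mk11 0 0 0 0 1)))))"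
  by (simp add: madd_mk11 msmul_mk11)

lemma hdiff_cong: assumes "\<forall>ys. length ys = N \<and> set ys \<subseteq> S11 \<longrightarrow> F ys = G ys"
  shows "hdiff S11 lact ract N F xs = hdiff S11 lact ract N G xs"
proof (cases "length xs = Suc N \<and> set xs \<subseteq> S11")
  case True
  have v: "\<And>ys. length ys = N \<Longrightarrow> set ys \<subseteq> S11 \<Longrightarrow> F ys = G ys" using assms by blast
  have t1: "F (tl xs) = G (tl xs)" proof (rule v)
    have "set (tl xs) \<subseteq> set xs" by (cases xs) auto
    then show "set (tl xs) \<subseteq> S11" using True by blast
  qed (use True in simp)
  have t2: "F (take N xs) = G (take N xs)" using True by (intro v) (auto dest: in_set_takeD)
  have t3: "F (take i xs @ [mmul (xs ! i) (xs ! (i + 1))] @ drop (i + 2) xs)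
          = G (take i xs @ [mmul (xs ! i) (xs ! (i + 1))] @ drop (i + 2) xs)" if "i < N" for i
  proof (rule v)
    show "length (take i xs @ [mmul (xs ! i) (xs ! (i + 1))] @ drop (i + 2) xs) = N" using True that by auto
    have "xs ! i \<in> S11" "xs ! (i+1) \<in> S11" using True that by (auto simp: subset_iff)
    then show "set (take i xs @ [mmul (xs ! i) (xs ! (i + 1))] @ drop (i + 2) xs) \<subseteq> S11"
      using True by (auto dest: in_set_takeD in_set_dropD intro: S11_closed)
  qed
  have s: "(\<Sum>i<N. (-1)^(i+1) * F (take i xs @ [mmul (xs ! i) (xs ! (i + 1))] @ drop (i + 2) xs))
     = (\<Sum>i<N. (-1)^(i+1) * G (take i xs @ [mmul (xs ! i) (xs ! (i + 1))] @ drop (i + 2) xs))"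
    using t3 by (intro sum.cong) auto
  show ?thesis unfolding hdiff_def by (simp only: t1 t2 s)
next
  case False
  then show ?thesis by (simp only: hdiff_def if_not_P[OF False] if_False)
qed

lemma hdiff_diff: "hdiff S11 lact ract N (\<lambda>ys. F ys - G ys) xs = hdiff S11 lact ract N F xs - hdiff S11 lact ract N G xs"
  unfolding hdiff_def lact_def ract_def by (simp add: right_diff_distrib sum_subtractf sum_negf algebra_simps)

lemma L1: assumes "u \<in> S11" "y \<in> S11" "set t \<subseteq> S11" "length t = k"
  shows "hdiff S11 lact ract (Suc k) f (u#y#t) + hdiff S11 lact ract k (\<lambda>ys. f (u#ys)) (y#t)
    = u 0 0 * f (y#t) - f (mmul u y # t) + y 0 0 * f (u#t)"
  using assms unfolding hdiff_def lact_def ract_def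
  by (simp add: sum.lessThan_Suc_shift algebra_simps sum_negf del: sum.lessThan_Suc)

lemma L2: assumes "x0 \<in> S11" "x1 \<in> S11" "set t \<subseteq> S11" "length t = k"
  shows "hdiff S11 lact ract (Suc k) (\<lambda>ys. \<alpha> (hd ys) * p (tl ys)) (x0#x1#t) + \<alpha> x0 * hdiff S11 lact ract k p (x1#t)
    = (x0 0 0 * \<alpha> x1 - \<alpha> (mmul x0 x1) + \<alpha> x0 * x1 0 0) * p t"
  using assms unfolding hdiff_def lact_def ract_def
  by (simp add: sum.lessThan_Suc_shift algebra_simps sum_distrib_left sum_negf del: sum.lessThan_Suc)

abbreviation "E1 \<equiv> mk11 1 0 0 0 0"
abbreviation "E12 \<equiv> mk11 0 1 0 0 0"
abbreviation "E13 \<equiv> mk11 0 0 1 0 0"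
abbreviation "E23 \<equiv> mk11 0 0 0 1 0"
abbreviation "E22 \<equiv> mk11 0 0 0 0 1"

lemma cadd: "f \<in> cochains A n \<Longrightarrow> i < n \<Longrightarrow> length xs = n \<Longrightarrow> set xs \<subseteq> A \<Longrightarrow> y \<in> A \<Longrightarrow> z \<in> A \<Longrightarrow>
   f (xs[i := madd y z]) = f (xs[i := y]) + f (xs[i := z])"
  unfolding cochains_def by blast

lemma csm: "f \<in> cochains A n \<Longrightarrow> i < n \<Longrightarrow> length xs = n \<Longrightarrow> set xs \<subseteq> A \<Longrightarrow> y \<in> A \<Longrightarrow>
   f (xs[i := msmul r y]) = r * f (xs[i := y])"
  unfolding cochains_def by blast

lemma czero: "f \<in> cochains A n \<Longrightarrow> \<not> (length xs = n \<and> set xs \<subseteq> A) \<Longrightarrow> f xs = 0"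
  unfolding cochains_def by blast

lemma cexp: assumes "f \<in> cochains S11 n" "i < n" "length xs = n" "set xs \<subseteq> S11"
  shows "f (xs[i := mk11 a b c d e]) = a * f (xs[i := E1]) + b * f (xs[i := E12]) + c * f (xs[i := E13])
     + d * f (xs[i := E23]) + e * f (xs[i := E22])"
proof -
  have ad: "\<And>y z. y \<in> S11 \<Longrightarrow> z \<in> S11 \<Longrightarrow> f (xs[i := madd y z]) = f (xs[i := y]) + f (xs[i := z])"
    using cadd[OF assms] .
  have sm: "\<And>r y. y \<in> S11 \<Longrightarrow> f (xs[i := msmul r y]) = r * f (xs[i := y])"
    using csm[OF assms] .
  show ?thesis by (subst mk11_decomp) (simp add: ad sm S11_closed)
qed

lemma cexp0: assumes "f \<in> cochains S11 (Suc m)" "length t = m" "set t \<subseteq> S11"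
  shows "f (mk11 a b c d e # t) = a * f (E1 # t) + b * f (E12 # t) + c * f (E13 # t)
     + d * f (E23 # t) + e * f (E22 # t)"
  using cexp[OF assms(1), of 0 "E1 # t" a b c d e] assms by simp

lemma cexp1: assumes "f \<in> cochains S11 (Suc (Suc m))" "y \<in> S11" "length t = m" "set t \<subseteq> S11"
  shows "f (y # mk11 a b c d e # t) = a * f (y # E1 # t) + b * f (y # E12 # t) + c * f (y # E13 # t)
     + d * f (y # E23 # t) + e * f (y # E22 # t)"
  using cexp[OF assms(1), of "Suc 0" "y # E1 # t" a b c d e] assms by simp

definition hh :: "('a::comm_ring_1 m3 list \<Rightarrow> 'a) \<Rightarrow> nat \<Rightarrow> 'a m3 list \<Rightarrow> 'a" where
  "hh f k ys = (if length ys = Suc k \<and> set ys \<subseteq> S11 then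
     f (E1 # ys) - hd ys 0 2 * f (E12 # E23 # tl ys) - hd ys 0 1 * f (E12 # E22 # tl ys) else 0)"

lemma hh_coch: assumes f: "f \<in> cochains S11 (Suc (Suc k))" shows "hh f k \<in> cochains S11 (Suc k)"
  unfolding cochains_def mem_Collect_eq
proof (rule conjI)
  show "\<forall>xs. \<not> (length xs = Suc k \<and> set xs \<subseteq> S11) \<longrightarrow> hh f k xs = 0"
    unfolding hh_def by (intro allI impI) (rule if_not_P)
next
 show "\<forall>i<Suc k. \<forall>xs y z r. length xs = Suc k \<and> set xs \<subseteq> S11 \<and> y \<in> S11 \<and> z \<in> S11 \<longrightarrow>
         hh f k (xs[i := madd y z]) = hh f k (xs[i := y]) + hh f k (xs[i := z]) \<and>
         hh f k (xs[i := msmul r y]) = r * hh f k (xs[i := y])"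
 proof (intro allI impI)
  fix i and xs :: "'a m3 list" and y z :: "'a m3" and r :: 'a
  assume i: "i < Suc k" and h: "length xs = Suc k \<and> set xs \<subseteq> S11 \<and> y \<in> S11 \<and> z \<in> S11"
  obtain x0 t where xs: "xs = x0 # t" using h by (cases xs) auto
  have t: "length t = k" "set t \<subseteq> S11" "x0 \<in> S11" using h xs by auto
  have yz: "y \<in> S11" "z \<in> S11" "madd y z \<in> S11" "msmul r y \<in> S11" using h by (auto intro: S11_closed)
  show "hh f k (xs[i := madd y z]) = hh f k (xs[i := y]) + hh f k (xs[i := z]) \<and>
        hh f k (xs[i := msmul r y]) = r * hh f k (xs[i := y])"
  proof (cases i)
    case 0
    have a1: "f (E1 # madd y z # t) = f (E1 # y # t) + f (E1 # z # t)"
      using cadd[OF f, of "Suc 0" "E1 # x0 # t" y z] t yz by simp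
    have a2: "f (E1 # msmul r y # t) = r * f (E1 # y # t)"
      using csm[OF f, of "Suc 0" "E1 # x0 # t" y r] t yz by simp
    show ?thesis using 0 xs t yz a1 a2 by (simp add: hh_def madd_def msmul_def algebra_simps)
  next
    case (Suc j)
    have j: "j < k" using i Suc by simp
    have st: "\<And>w. w \<in> S11 \<Longrightarrow> set (t[j := w]) \<subseteq> S11" using t(2) set_update_subset_insert by fastforce
    have a: "\<And>u v. u \<in> S11 \<Longrightarrow> v \<in> S11 \<Longrightarrow> f (u # v # t[j := madd y z]) = f (u # v # t[j := y]) + f (u # v # t[j := z])"
      subgoal for u v using cadd[OF f, of "Suc (Suc j)" "u # v # t" y z] t yz j by simp
      done
    have m: "\<And>u v. u \<in> S11 \<Longrightarrow> v \<in> S11 \<Longrightarrow> f (u # v # t[j := msmul r y]) = r * f (u # v # t[j := y])"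
      subgoal for u v using csm[OF f, of "Suc (Suc j)" "u # v # t" y r] t yz j by simp
      done
    show ?thesis using Suc xs t yz st a m by (simp add: hh_def algebra_simps)
  qed
 qed
qed

lemma solve1: "a + b = (c::'a::comm_ring_1) \<Longrightarrow> a = c - b" by (simp add: algebra_simps)
lemma solve2: "a + b = (c::'a::comm_ring_1) \<Longrightarrow> b = c - a" by (simp add: algebra_simps)

lemma cocyc0: "f \<in> cocycles S11 lact ract n \<Longrightarrow> hdiff S11 lact ract n f xs = 0"
  unfolding cocycles_def by (auto dest: fun_cong)

lemma main_eq:
  assumes fc: "f \<in> cocycles S11 lact ract (Suc (Suc k))"
    and x1: "x1 \<in> S11" and x2: "x2 \<in> S11" and t: "set t \<subseteq> S11" "length t = k"
  shows "hdiff S11 lact ract (Suc k) (hh f k) (x1 # x2 # t) = f (x1 # x2 # t)"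
proof -
  have f: "f \<in> cochains S11 (Suc (Suc k))" using fc by (simp add: cocycles_def)
  obtain a1 b1 c1 d1 e1 where X1: "x1 = mk11 a1 b1 c1 d1 e1" using x1 by (auto elim: S11E)
  obtain a2 b2 c2 d2 e2 where X2: "x2 = mk11 a2 b2 c2 d2 e2" using x2 by (auto elim: S11E)
  define P where "P = (\<lambda>ys. f (E1 # ys))"
  define Q where "Q = (\<lambda>ys. f (E12 # E23 # ys))"
  define B where "B = (\<lambda>ys. f (E12 # E22 # ys))"
  define r where "r = (\<lambda>ys. f (E12 # ys))"
  let ?D = "hdiff S11 lact ract"
  let ?x = "x1 # x2 # t"
  have cong: "?D (Suc k) (hh f k) ?x = ?D (Suc k) (\<lambda>ys. (\<lambda>ys. P ys - hd ys 0 2 * Q (tl ys)) ys - hd ys 0 1 * B (tl ys)) ?x"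
    by (rule hdiff_cong) (auto simp: hh_def P_def Q_def B_def)
  have split: "?D (Suc k) (hh f k) ?x = ?D (Suc k) P ?x - ?D (Suc k) (\<lambda>ys. hd ys 0 2 * Q (tl ys)) ?x
      - ?D (Suc k) (\<lambda>ys. hd ys 0 1 * B (tl ys)) ?x"
    unfolding cong hdiff_diff ..
  have z: "\<And>xs. ?D (Suc (Suc k)) f xs = 0" using cocyc0[OF fc] .
  have eP: "?D (Suc k) P ?x = f ?x - f (mk11 a1 b1 c1 0 0 # x2 # t) + a1 * f (E1 # x2 # t)"
    using L1[of E1 x1 "x2 # t" "Suc k" f] x1 x2 t z unfolding P_def by (simp add: X1 mmul_mk11)
  have x1e: "f (mk11 a1 b1 c1 0 0 # x2 # t) = a1 * f (E1 # x2 # t) + b1 * f (E12 # x2 # t) + c1 * f (E13 # x2 # t)"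
    using cexp0[OF f, of "x2 # t" a1 b1 c1 0 0] x2 t by simp
  have eG: "?D (Suc k) (\<lambda>ys. hd ys 0 2 * Q (tl ys)) ?x + c1 * ?D k Q (x2 # t) = - (b1 * d2) * Q t"
    using L2[of x1 x2 t k "\<lambda>m. m 0 2" Q] x1 x2 t by (simp add: X1 X2 mmul_mk11 algebra_simps)
  have eQ: "?D (Suc k) r (E23 # x2 # t) + ?D k Q (x2 # t) = - f (E12 # mk11 0 0 0 a2 0 # t) + a2 * Q t"
    using L1[of E23 x2 t k r] x2 t unfolding Q_def r_def by (simp add: X2 mmul_mk11)
  have x2e: "f (E12 # mk11 0 0 0 a2 0 # t) = a2 * Q t"
    using cexp1[OF f, of E12 t 0 0 0 a2 0] t by (simp add: Q_def)
  have eR: "?D (Suc k) r (E23 # x2 # t) = - f (E13 # x2 # t)"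
    using L1[of E12 E23 "x2 # t" "Suc k" f] x2 t z unfolding r_def by (simp add: mmul_mk11)
  have eB: "?D (Suc k) (\<lambda>ys. hd ys 0 1 * B (tl ys)) ?x + b1 * ?D k B (x2 # t) = (b1 * a2 - b1 * e2) * B t"
    using L2[of x1 x2 t k "\<lambda>m. m 0 1" B] x1 x2 t by (simp add: X1 X2 mmul_mk11 algebra_simps)
  have eBB: "?D (Suc k) r (E22 # x2 # t) + ?D k B (x2 # t) = - f (E12 # mk11 0 0 0 d2 e2 # t) + a2 * B t"
    using L1[of E22 x2 t k r] x2 t unfolding B_def r_def by (simp add: X2 mmul_mk11)
  have x3e: "f (E12 # mk11 0 0 0 d2 e2 # t) = d2 * Q t + e2 * B t"
    using cexp1[OF f, of E12 t 0 0 0 d2 e2] t by (simp add: Q_def B_def)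
  have eR2: "?D (Suc k) r (E22 # x2 # t) = - f (E12 # x2 # t)"
    using L1[of E12 E22 "x2 # t" "Suc k" f] x2 t z unfolding r_def by (simp add: mmul_mk11)
  have s1: "?D (Suc k) P ?x = f ?x - b1 * f (E12 # x2 # t) - c1 * f (E13 # x2 # t)"
    unfolding eP x1e by (simp add: algebra_simps)
  have s2: "?D k Q (x2 # t) = f (E13 # x2 # t)" using solve2[OF eQ] by (simp add: x2e eR)
  have s3: "?D (Suc k) (\<lambda>ys. hd ys 0 2 * Q (tl ys)) ?x = - (b1 * d2) * Q t - c1 * f (E13 # x2 # t)"
    using solve1[OF eG] by (simp add: s2)
  have s4: "?D k B (x2 # t) = - (d2 * Q t + e2 * B t) + a2 * B t + f (E12 # x2 # t)"
    using solve2[OF eBB] by (simp add: x3e eR2)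
  have s5: "?D (Suc k) (\<lambda>ys. hd ys 0 1 * B (tl ys)) ?x = b1 * d2 * Q t - b1 * f (E12 # x2 # t)"
    using solve1[OF eB] by (simp add: s4 algebra_simps)
  show ?thesis
    unfolding split s1 s3 s5 by (simp add: algebra_simps)
qed

lemma vanish2: assumes fc: "f \<in> cocycles S11 lact ract (Suc (Suc k))"
  shows "f \<in> coboundaries S11 lact ract (Suc (Suc k))"
proof -
  have f: "f \<in> cochains S11 (Suc (Suc k))" using fc by (simp add: cocycles_def)
  have "f = hdiff S11 lact ract (Suc k) (hh f k)"
  proof
    fix xs
    show "f xs = hdiff S11 lact ract (Suc k) (hh f k) xs"
    proof (cases "length xs = Suc (Suc k) \<and> set xs \<subseteq> S11")
      case True
      then obtain x1 x2 t where xs: "xs = x1 # x2 # t"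
        by (metis length_Suc_conv)
      show ?thesis using main_eq[OF fc, of x1 x2 t] True xs by simp
    next
      case False
      have "hdiff S11 lact ract (Suc k) (hh f k) xs = 0"
        by (simp only: hdiff_def if_not_P[OF False] if_False)
      then show ?thesis using czero[OF f False] by simp
    qed
  qed
  then show ?thesis using hh_coch[OF f] by (simp add: coboundaries_def)
qed

lemma vanish1: assumes fc: "f \<in> cocycles S11 lact ract (Suc 0)"
  shows "f \<in> coboundaries S11 lact ract (Suc 0)"
proof -
  have f: "f \<in> cochains S11 (Suc 0)" using fc by (simp add: cocycles_def)
  have d: "\<And>u v. u \<in> S11 \<Longrightarrow> v \<in> S11 \<Longrightarrow> u 0 0 * f [v] - f [mmul u v] + f [u] * v 0 0 = 0"
    subgoal for u v using cocyc0[OF fc, of "[u, v]"] by (simp add: hdiff_def lact_def ract_def)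
    done
  have z1: "f [E1] = 0" using d[of E1 E1] by (simp add: mmul_mk11)
  have z2: "f [E12] = 0" using d[of E12 E22] by (simp add: mmul_mk11)
  have z3: "f [E13] = 0" using d[of E12 E23] by (simp add: mmul_mk11)
  have z4: "f [E23] = 0" using d[of E22 E23] by (simp add: mmul_mk11)
  have z5: "f [E22] = 0" using d[of E22 E22] by (simp add: mmul_mk11)
  have f0: "f = (\<lambda>_. 0)"
  proof
    fix xs
    show "f xs = 0"
    proof (cases "length xs = Suc 0 \<and> set xs \<subseteq> S11")
      case True
      then obtain x where xs: "xs = [x]" "x \<in> S11" by (metis length_Suc_conv length_0_conv list.set_intros(1) subsetD)
      then obtain a b c d e where "x = mk11 a b c d e" by (auto elim: S11E)
      then show ?thesis using cexp0[OF f, of "[]" a b c d e] xs z1 z2 z3 z4 z5 by simp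
    qed (rule czero[OF f])
  qed
  have c0: "(\<lambda>_. 0) \<in> cochains (S11 :: 'a m3 set) 0" by (simp add: cochains_def)
  have "hdiff S11 lact ract 0 (\<lambda>_. 0) = (\<lambda>_. (0::'a))" by (simp add: fun_eq_iff hdiff_def lact_def ract_def)
  then show ?thesis using c0 f0 by (simp add: coboundaries_def image_iff) metis
qed

theorem lemma5p7:
  fixes R :: "'a::comm_ring_1 itself"
  shows "(\<exists>\<phi> :: ('a m3 list \<Rightarrow> 'a) \<Rightarrow> 'a.
            bij_betw \<phi> (cocycles (S11 :: 'a m3 set) lact ract 0) (UNIV :: 'a set) \<and>
            (\<forall>f \<in> cocycles S11 lact ract 0. \<forall>g \<in> cocycles S11 lact ract 0.
                \<phi> (\<lambda>xs. f xs + g xs) = \<phi> f + \<phi> g) \<and>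
            (\<forall>r. \<forall>f \<in> cocycles S11 lact ract 0. \<phi> (\<lambda>xs. r * f xs) = r * \<phi> f))
       \<and> (\<forall>n>0. hochschild_vanishes (S11 :: 'a m3 set) lact ract n)"
proof (intro conjI)
  show "\<forall>n>0. hochschild_vanishes (S11 :: 'a m3 set) lact ract n"
  proof (intro allI impI)
    fix n :: nat assume "n > 0"
    then consider "n = Suc 0" | k where "n = Suc (Suc k)" by (metis gr0_conv_Suc not0_implies_Suc)
    then show "hochschild_vanishes (S11 :: 'a m3 set) lact ract n"
      unfolding hochschild_vanishes_def by cases (auto intro: vanish1 vanish2)
  qed
next
  let ?C = "cocycles (S11 :: 'a m3 set) lact ract 0"
  have mem: "\<And>f. f \<in> ?C \<longleftrightarrow> (\<forall>xs. xs \<noteq> [] \<longrightarrow> f xs = 0)"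
  proof
    fix f :: "'a m3 list \<Rightarrow> 'a"
    assume "f \<in> ?C"
    then have "f \<in> cochains S11 0" by (simp add: cocycles_def)
    then show "\<forall>xs. xs \<noteq> [] \<longrightarrow> f xs = 0" by (auto simp: cochains_def)
  next
    fix f :: "'a m3 list \<Rightarrow> 'a"
    assume h: "\<forall>xs. xs \<noteq> [] \<longrightarrow> f xs = 0"
    have "f \<in> cochains S11 0" using h by (auto simp: cochains_def)
    moreover have "hdiff S11 lact ract 0 f = (\<lambda>_. 0)"
      by (auto simp: fun_eq_iff hdiff_def lact_def ract_def mult.commute length_Suc_conv)
    ultimately show "f \<in> ?C" by (simp add: cocycles_def)
  qed
  show "\<exists>\<phi> :: ('a m3 list \<Rightarrow> 'a) \<Rightarrow> 'a. bij_betw \<phi> ?C (UNIV :: 'a set) \<and>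
            (\<forall>f \<in> ?C. \<forall>g \<in> ?C. \<phi> (\<lambda>xs. f xs + g xs) = \<phi> f + \<phi> g) \<and>
            (\<forall>r. \<forall>f \<in> ?C. \<phi> (\<lambda>xs. r * f xs) = r * \<phi> f)"
  proof (intro exI conjI)
    show "bij_betw (\<lambda>f. f []) ?C UNIV"
    proof (rule bij_betwI')
      fix f g assume "f \<in> ?C" "g \<in> ?C"
      then show "(f [] = g []) = (f = g)" unfolding mem by (metis ext)
    next
      fix r :: 'a
      show "\<exists>f\<in>?C. r = f []" by (rule bexI[of _ "\<lambda>xs. if xs = [] then r else 0"]) (auto simp: mem)
    qed auto
  qed auto
qed

end
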